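(* Let $L$ be a distributive lattice. The relation $\le$ on positive simple functions over $L$ is transitive: if $\sum_ir_ia_i\le\sum_js_jb_j$ and $\sum_js_jb_j\le\sum_kt_kc_k$, then $\sum_ir_ia_i\le\sum_kt_kc_k$.
   Context: A positive simple function over a distributive lattice $L$ is a formal finite sum $\sum_i r_ix_i$ with rationals $r_i\ge0$ and $x_i\in L$. For a finite index set $I$, $x_I:=\bigwedge_{i\in I}x_i$ ($x_\emptyset=1$) and $r_I:=\sum_{i\in I}r_i$ ($r_\emptyset=0$). Define $\sum_ir_ix_i\le\sum_js_jy_j$ iff for every finite index set $I$, $x_I\le\bigvee\{y_J: J\text{ a finite index set with } r_I\le s_J\}$. *)

theory Defs
  imports Main "HOL.Rat"
begin

text \<open>A positive simple function over a lattice 'a is represented as a finite list of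
  coefficient/element pairs (r_i, x_i); its index set is {..<length f}.\<close>

type_synonym 'a psf = "(rat \<times> 'a) list"

definition psf_pos :: "'a psf \<Rightarrow> bool" where
  "psf_pos f \<longleftrightarrow> (\<forall>p \<in> set f. fst p \<ge> 0)"

definition psf_coeff :: "'a psf \<Rightarrow> nat set \<Rightarrow> rat" where
  "psf_coeff f I = (\<Sum>i\<in>I. fst (f ! i))"

definition psf_meet :: "('a::bounded_lattice) psf \<Rightarrow> nat set \<Rightarrow> 'a" where
  "psf_meet f I = Finite_Set.fold inf top ((\<lambda>i. snd (f ! i)) ` I)"

definition fjoin :: "('a::bounded_lattice) set \<Rightarrow> 'a" where
  "fjoin S = Finite_Set.fold sup bot S"

definition psf_le :: "('a::{bounded_lattice,distrib_lattice}) psf \<Rightarrow> 'a psf \<Rightarrow> bool" where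
  "psf_le f g \<longleftrightarrow>
     (\<forall>I. I \<subseteq> {..<length f} \<longrightarrow>
        psf_meet f I \<le>
          fjoin {psf_meet g J | J. J \<subseteq> {..<length g} \<and> psf_coeff f I \<le> psf_coeff g J})"

end

theory Submission
  imports Defs
begin

lemma fjoin_insert:
  assumes "finite S"
  shows "fjoin (insert x S) = sup x (fjoin (S::'a::{bounded_lattice} set))"
proof -
  interpret comp_fun_idem "sup :: 'a \<Rightarrow> 'a \<Rightarrow> 'a" by (fact comp_fun_idem_sup)
  show ?thesis unfolding fjoin_def using assms by (simp add: fold_insert_idem)
qed

lemma fjoin_props:
  assumes "finite S"
  shows "(\<forall>x\<in>S. x \<le> fjoin (S::'a::{bounded_lattice} set)) \<and>
         (\<forall>y. (\<forall>x\<in>S. x \<le> y) \<longrightarrow> fjoin S \<le> y)"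
  using assms
proof (induction S rule: finite_induct)
  case empty
  then show ?case by (simp add: fjoin_def)
next
  case (insert x F)
  then show ?case by (auto simp: fjoin_insert intro: le_supI2)
qed

lemma fjoin_ub: "finite S \<Longrightarrow> x \<in> S \<Longrightarrow> x \<le> fjoin S"
  using fjoin_props by blast
lemma fjoin_lub: "finite S \<Longrightarrow> (\<And>x. x \<in> S \<Longrightarrow> x \<le> y) \<Longrightarrow> fjoin S \<le> y"
  using fjoin_props by blast

lemma fin_sets: "finite {h J | J. J \<subseteq> {..<(n::nat)} \<and> P J}"
proof -
  have "{h J | J. J \<subseteq> {..<(n::nat)} \<and> P J} \<subseteq> h ` Pow {..<n}" by auto
  then show ?thesis by (rule finite_subset) simp
qed

theorem lemma4p4:
  fixes a b c :: "('a::{bounded_lattice,distrib_lattice}) psf"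
  assumes "psf_pos a" and "psf_pos b" and "psf_pos c"
    and "psf_le a b" and "psf_le b c"
  shows "psf_le a c"
  unfolding psf_le_def
proof (intro allI impI)
  fix I assume I: "I \<subseteq> {..<length a}"
  let ?B = "{psf_meet b J | J. J \<subseteq> {..<length b} \<and> psf_coeff a I \<le> psf_coeff b J}"
  let ?C = "{psf_meet c K | K. K \<subseteq> {..<length c} \<and> psf_coeff a I \<le> psf_coeff c K}"
  have 1: "psf_meet a I \<le> fjoin ?B" using assms(4) I unfolding psf_le_def by (elim allE impE) assumption+
  have "\<forall>x\<in>?B. x \<le> fjoin ?C"
  proof
    fix x assume "x \<in> ?B"
    then obtain J where J: "J \<subseteq> {..<length b}" "psf_coeff a I \<le> psf_coeff b J"
      and x: "x = psf_meet b J" by blast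
    let ?C' = "{psf_meet c K | K. K \<subseteq> {..<length c} \<and> psf_coeff b J \<le> psf_coeff c K}"
    have 2: "x \<le> fjoin ?C'" using assms(5) J(1) unfolding x psf_le_def by (elim allE impE) assumption+
    have "\<forall>y\<in>?C'. y \<le> fjoin ?C"
    proof
      fix y assume "y \<in> ?C'"
      then obtain K where K: "K \<subseteq> {..<length c}" "psf_coeff b J \<le> psf_coeff c K" "y = psf_meet c K" by blast
      then have "y \<in> ?C" using J(2) order_trans by blast
      then show "y \<le> fjoin ?C" by (rule fjoin_ub[OF fin_sets])
    qed
    then have "fjoin ?C' \<le> fjoin ?C" by (intro fjoin_lub[OF fin_sets]) blast
    then show "x \<le> fjoin ?C" using 2 by (rule order_trans[rotated])
  qed
  then have "fjoin ?B \<le> fjoin ?C" by (intro fjoin_lub[OF fin_sets]) blast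
  then show "psf_meet a I \<le> fjoin ?C" using 1 by (rule order_trans[rotated])
qed

end
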